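(* Let $X$ be a Banach space, $P$ a metric space with a flow $\theta$, $\lambda_0\in\mathbb{R}$, and for $\lambda$ in an open interval around $\lambda_0$ let $\varphi_\lambda$ be cocycle semiflows on $X$ over the same base flow $\theta$ on $P$. Assume: (H1) $P$ is compact; (H2) for every $T>0$ and every compact $B\subset X$, $\lim_{\lambda\to\lambda_0}\|\varphi_\lambda(t,p)x-\varphi_{\lambda_0}(t,p)x\|=0$ uniformly in $(t,x)\in[0,T]\times B$ and $p\in P$. Let $A_{\lambda_0}(\cdot)=\{A_{\lambda_0}(p)\}_{p\in P}$ be a pullback attractor of $\varphi_{\lambda_0}$ which pullback attracts a neighborhood $U(\cdot)$ of itself, and set $\mathbb{U}=\bigcup_{p\in P}U(p)\times\{p\}$, $\mathbb{A}_{\lambda_0}=\overline{\bigcup_{p\in P}A_{\lambda_0}(p)\times\{p\}}$. Assume $\mathbb{U}$ is a compact neighborhood of $\mathbb{A}_{\lambda_0}$ in $Y=X\times P$. Then: (a) there exists $\delta>0$ such that for each $\lambda\in(\lambda_0-\delta,\lambda_0+\delta)$, $\varphi_\lambda$ has a pullback attractor $A_\lambda(\cdot)$, and for each $p\in P$, $\lim_{\lambda\to\lambda_0}H_X\big(A_\lambda(p),\bigcup_{q\in P}A_{\lambda_0}(q)\big)=0$; (b) if in addition $U(\cdot)$ is forward invariant under $\varphi_{\lambda_0}$, then for each $p\in P$, $\lim_{\lambda\to\lambda_0}H_X(A_\lambda(p),A_{\lambda_0}(p))=0$.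
   Context: A cocycle semiflow over a flow $\theta$ on $P$ is a continuous map $\varphi:\mathbb{R}^+\times P\times X\to X$ with $\varphi(0,p)x=x$, $\varphi(t+s,p)x=\varphi(t,\theta_sp)\varphi(s,p)x$. A nonautonomous set $B(\cdot)$ is a family $\{B(p)\}_{p\in P}$ of subsets of $X$; it is compact if each $B(p)$ is compact; $U(\cdot)$ is a neighborhood of $B(\cdot)$ if $\overline{B(p)}\subset\mathrm{int}\,U(p)$ for every $p$; it is invariant (resp. forward invariant) if $\varphi(t,p)B(p)=B(\theta_tp)$ (resp. $\subset$) for all $t\ge0,p\in P$. $B(\cdot)$ pullback attracts $C(\cdot)$ if $\lim_{t\to\infty}H_X(\varphi(t,\theta_{-t}p)C(\theta_{-t}p),B(p))=0$ for every $p$, where $H_X(M,N)=\sup_{x\in M}\inf_{y\in N}\|x-y\|$. A (local) pullback attractor is a compact invariant nonautonomous set that pullback attracts some neighborhood of itself. *)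

theory Defs
  imports "HOL-Analysis.Analysis"
begin

definition is_flow :: "(real \<Rightarrow> 'p::topological_space \<Rightarrow> 'p) \<Rightarrow> bool" where
  "is_flow \<theta> \<longleftrightarrow> continuous_on UNIV (\<lambda>(t, p). \<theta> t p)
      \<and> (\<forall>p. \<theta> 0 p = p) \<and> (\<forall>t s p. \<theta> (t + s) p = \<theta> t (\<theta> s p))"

text \<open>Cocycle semiflow phi over theta; phi t p x stands for phi(t,p)x, only t >= 0 matters.\<close>
definition cocycle_semiflow ::
  "(real \<Rightarrow> 'p::topological_space \<Rightarrow> 'x::topological_space \<Rightarrow> 'x) \<Rightarrow> (real \<Rightarrow> 'p \<Rightarrow> 'p) \<Rightarrow> bool" where
  "cocycle_semiflow \<phi> \<theta> \<longleftrightarrow> continuous_on ({0..} \<times> UNIV \<times> UNIV) (\<lambda>(t, p, x). \<phi> t p x)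
      \<and> (\<forall>p x. \<phi> 0 p x = x)
      \<and> (\<forall>t s p x. 0 \<le> t \<longrightarrow> 0 \<le> s \<longrightarrow> \<phi> (t + s) p x = \<phi> t (\<theta> s p) (\<phi> s p x))"

text \<open>Hausdorff semi-distance H_X(M,N) = sup_{x in M} inf_{y in N} ||x - y||, valued in [0,\<infinity>]
  (sup over the empty set is 0, inf over the empty set is \<infinity>).\<close>
definition hsemi :: "'x::real_normed_vector set \<Rightarrow> 'x set \<Rightarrow> ennreal" where
  "hsemi M N = (SUP x\<in>M. INF y\<in>N. ennreal (norm (x - y)))"

definition na_compact :: "('p \<Rightarrow> 'x::topological_space set) \<Rightarrow> bool" where
  "na_compact B \<longleftrightarrow> (\<forall>p. compact (B p) \<and> B p \<noteq> {})"

definition na_neighborhood :: "('p \<Rightarrow> 'x::topological_space set) \<Rightarrow> ('p \<Rightarrow> 'x set) \<Rightarrow> bool" where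
  "na_neighborhood U B \<longleftrightarrow> (\<forall>p. closure (B p) \<subseteq> interior (U p))"

definition na_invariant ::
  "(real \<Rightarrow> 'p \<Rightarrow> 'x \<Rightarrow> 'x) \<Rightarrow> (real \<Rightarrow> 'p \<Rightarrow> 'p) \<Rightarrow> ('p \<Rightarrow> 'x set) \<Rightarrow> bool" where
  "na_invariant \<phi> \<theta> B \<longleftrightarrow> (\<forall>t p. 0 \<le> t \<longrightarrow> \<phi> t p ` B p = B (\<theta> t p))"

definition na_forward_invariant ::
  "(real \<Rightarrow> 'p \<Rightarrow> 'x \<Rightarrow> 'x) \<Rightarrow> (real \<Rightarrow> 'p \<Rightarrow> 'p) \<Rightarrow> ('p \<Rightarrow> 'x set) \<Rightarrow> bool" where
  "na_forward_invariant \<phi> \<theta> B \<longleftrightarrow> (\<forall>t p. 0 \<le> t \<longrightarrow> \<phi> t p ` B p \<subseteq> B (\<theta> t p))"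

definition pullback_attracts ::
  "(real \<Rightarrow> 'p \<Rightarrow> 'x::real_normed_vector \<Rightarrow> 'x) \<Rightarrow> (real \<Rightarrow> 'p \<Rightarrow> 'p) \<Rightarrow> ('p \<Rightarrow> 'x set) \<Rightarrow> ('p \<Rightarrow> 'x set) \<Rightarrow> bool" where
  "pullback_attracts \<phi> \<theta> B C \<longleftrightarrow>
     (\<forall>p. ((\<lambda>t. hsemi (\<phi> t (\<theta> (-t) p) ` C (\<theta> (-t) p)) (B p)) \<longlongrightarrow> 0) at_top)"

definition pullback_attractor ::
  "(real \<Rightarrow> 'p \<Rightarrow> 'x::real_normed_vector \<Rightarrow> 'x) \<Rightarrow> (real \<Rightarrow> 'p \<Rightarrow> 'p) \<Rightarrow> ('p \<Rightarrow> 'x set) \<Rightarrow> bool" where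
  "pullback_attractor \<phi> \<theta> A \<longleftrightarrow> na_compact A \<and> na_invariant \<phi> \<theta> A
     \<and> (\<exists>U. na_neighborhood U A \<and> pullback_attracts \<phi> \<theta> A U)"

end

theory Submission
  imports Defs
begin

lemma flow_facts:
  assumes "is_flow \<theta>"
  shows "\<theta> 0 p = p" "\<theta> (t+s) p = \<theta> t (\<theta> s p)" "\<theta> t (\<theta> (-t) p) = p" "\<theta> (-t) (\<theta> t p) = p"
    "\<theta> a (\<theta> b p) = \<theta> (a+b) p"
  using assms unfolding is_flow_def by (metis add.right_inverse add.left_inverse)+

lemma flow_cont: assumes "is_flow \<theta>" shows "continuous_on UNIV (\<theta> t)"
proof -
  have c: "continuous_on UNIV (\<lambda>(t, p). \<theta> t p)" using assms unfolding is_flow_def by blast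
  have "continuous_on UNIV ((\<lambda>(t, p). \<theta> t p) \<circ> (\<lambda>p. (t,p)))"
    by (rule continuous_on_compose) (auto intro!: continuous_intros intro: continuous_on_subset[OF c])
  thus ?thesis by (simp add: o_def)
qed

definition sk :: "(real \<Rightarrow> 'p \<Rightarrow> 'x \<Rightarrow> 'x) \<Rightarrow> (real \<Rightarrow> 'p \<Rightarrow> 'p) \<Rightarrow> real \<Rightarrow> 'x \<times> 'p \<Rightarrow> 'x \<times> 'p" where
  "sk \<phi> \<theta> t w = (\<phi> t (snd w) (fst w), \<theta> t (snd w))"

lemma sk_semigroup:
  assumes "is_flow \<theta>" "cocycle_semiflow \<phi> \<theta>" "0 \<le> t" "0 \<le> s"
  shows "sk \<phi> \<theta> (t+s) w = sk \<phi> \<theta> t (sk \<phi> \<theta> s w)"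
  using assms unfolding sk_def cocycle_semiflow_def is_flow_def by auto

lemma sk_zero: assumes "is_flow \<theta>" "cocycle_semiflow \<phi> \<theta>" shows "sk \<phi> \<theta> 0 w = w"
  using assms unfolding sk_def cocycle_semiflow_def is_flow_def by auto

lemma sk_cont:
  assumes "is_flow \<theta>" "cocycle_semiflow \<phi> \<theta>"
  shows "continuous_on ({0..} \<times> UNIV) (\<lambda>tw. sk \<phi> \<theta> (fst tw) (snd tw))"
proof -
  have c1: "continuous_on ({0..} \<times> UNIV \<times> UNIV) (\<lambda>(t, p, x). \<phi> t p x)"
    using assms unfolding cocycle_semiflow_def by blast
  have c2: "continuous_on UNIV (\<lambda>(t, p). \<theta> t p)" using assms unfolding is_flow_def by blast
  have a: "continuous_on ({0..} \<times> UNIV) ((\<lambda>(t, p, x). \<phi> t p x) \<circ> (\<lambda>tw. (fst tw, snd (snd tw), fst (snd tw))))"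
    by (rule continuous_on_compose) (auto intro!: continuous_intros intro: continuous_on_subset[OF c1])
  have b: "continuous_on ({0..} \<times> UNIV) ((\<lambda>(t, p). \<theta> t p) \<circ> (\<lambda>tw. (fst tw, snd (snd tw))))"
    by (rule continuous_on_compose) (auto intro!: continuous_intros intro: continuous_on_subset[OF c2])
  have "continuous_on ({0..} \<times> UNIV) (\<lambda>tw. (((\<lambda>(t, p, x). \<phi> t p x) \<circ> (\<lambda>tw. (fst tw, snd (snd tw), fst (snd tw)))) tw,
       ((\<lambda>(t, p). \<theta> t p) \<circ> (\<lambda>tw. (fst tw, snd (snd tw)))) tw))"
    by (rule continuous_on_Pair[OF a b])
  thus ?thesis by (simp add: sk_def o_def case_prod_beta)
qed

lemma sk_cont1:
  assumes "is_flow \<theta>" "cocycle_semiflow \<phi> \<theta>" "0 \<le> t"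
  shows "continuous_on UNIV (sk \<phi> \<theta> t)"
proof -
  have "continuous_on UNIV ((\<lambda>tw. sk \<phi> \<theta> (fst tw) (snd tw)) \<circ> (\<lambda>w. (t,w)))"
    by (rule continuous_on_compose) (auto intro!: continuous_intros intro: continuous_on_subset[OF sk_cont[OF assms(1,2)]] simp: assms(3))
  thus ?thesis by (simp add: o_def)
qed

lemma phi_cont1:
  assumes "cocycle_semiflow \<phi> \<theta>" "0 \<le> t"
  shows "continuous_on UNIV (\<phi> t p)"
proof -
  have c1: "continuous_on ({0..} \<times> UNIV \<times> UNIV) (\<lambda>(t, p, x). \<phi> t p x)"
    using assms unfolding cocycle_semiflow_def by blast
  have "continuous_on UNIV ((\<lambda>(t, p, x). \<phi> t p x) \<circ> (\<lambda>x. (t,p,x)))"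
    by (rule continuous_on_compose) (auto intro!: continuous_intros intro: continuous_on_subset[OF c1] simp: assms)
  thus ?thesis by (simp add: o_def)
qed

lemma dec_inter:
  fixes C :: "real \<Rightarrow> 'a::t2_space set"
  assumes "\<And>s. T \<le> s \<Longrightarrow> compact (C s)" "\<And>s s'. T \<le> s \<Longrightarrow> s \<le> s' \<Longrightarrow> C s' \<subseteq> C s"
    "\<And>s. T \<le> s \<Longrightarrow> C s \<noteq> {}"
  shows "(\<Inter>s\<in>{T..}. C s) \<noteq> {}"
proof -
  have "C T \<inter> \<Inter>(C ` {T..}) \<noteq> {}"
  proof (rule compact_imp_fip)
    show "compact (C T)" using assms(1) by simp
    fix S assume "S \<in> C ` {T..}"
    then obtain s where "T \<le> s" "S = C s" by auto
    thus "closed S" using assms(1)[of s] compact_imp_closed by simp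
  next
    fix F' assume F': "finite F'" "F' \<subseteq> C ` {T..}"
    then obtain S' where S': "S' \<subseteq> {T..}" "finite S'" "F' = C ` S'" by (meson finite_subset_image)
    define m where "m = Max (insert T S')"
    have m: "T \<le> m" "\<And>s. s \<in> S' \<Longrightarrow> s \<le> m" using S' unfolding m_def by auto
    have "C m \<subseteq> C s" if "s \<in> insert T S'" for s using that S' m assms(2)[of s m] by auto
    hence "C m \<subseteq> C T \<inter> \<Inter>F'" using S' by auto
    thus "C T \<inter> \<Inter>F' \<noteq> {}" using assms(3)[OF m(1)] by blast
  qed
  thus ?thesis by auto
qed

lemma ennreal_tendsto_zeroI:
  fixes f :: "'a \<Rightarrow> ennreal"
  assumes "\<And>e::real. e > 0 \<Longrightarrow> eventually (\<lambda>x. f x \<le> ennreal e) F"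
  shows "(f \<longlongrightarrow> 0) F"
proof (rule order_tendstoI)
  fix a :: ennreal assume "a < 0" thus "eventually (\<lambda>x. a < f x) F" by simp
next
  fix a :: ennreal assume a: "0 < a"
  obtain e :: real where e: "e > 0" "ennreal e < a"
  proof (cases "a = \<infinity>")
    case True thus ?thesis using that[of 1] by simp
  next
    case False
    then obtain b where b: "a = ennreal b" "b > 0" using a by (cases a) auto
    thus ?thesis using that[of "b/2"] by (simp add: ennreal_lessI)
  qed
  show "eventually (\<lambda>x. f x < a) F"
    using assms[OF e(1)] by eventually_elim (use e in auto)
qed

lemma infdist_lessE:
  assumes "infdist x A < e" "A \<noteq> {}"
  obtains a where "a \<in> A" "dist x a < e"
  using assms by (auto simp: infdist_notempty cINF_less_iff)

lemma image_closure_compact: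
  fixes f :: "'a::metric_space \<Rightarrow> 'b::metric_space"
  assumes "continuous_on UNIV f" "compact (closure S)"
  shows "f ` closure S = closure (f ` S)"
proof
  show "f ` closure S \<subseteq> closure (f ` S)"
    by (rule image_closure_subset) (auto intro: continuous_on_subset[OF assms(1)] closure_subset[THEN subsetD])
  have "compact (f ` closure S)" by (rule compact_continuous_image) (auto intro: continuous_on_subset[OF assms(1)] assms(2))
  hence "closed (f ` closure S)" by (rule compact_imp_closed)
  moreover have "f ` S \<subseteq> f ` closure S" using closure_subset by blast
  ultimately show "closure (f ` S) \<subseteq> f ` closure S" by (rule closure_minimal[rotated])
qed

lemma fiber_compact:
  assumes "compact (N :: ('x::metric_space \<times> 'p::metric_space) set)"
  shows "compact {x. (x,p) \<in> N}"
proof -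
  have "{x. (x,p) \<in> N} = fst ` (N \<inter> (UNIV \<times> {p}))" by (auto intro: rev_image_eqI)
  moreover have "compact (N \<inter> (UNIV \<times> {p}))"
    by (rule compact_Int_closed[OF assms]) (simp add: closed_Times)
  ultimately show ?thesis by (auto intro!: compact_continuous_image continuous_intros)
qed

lemma fiber_closed:
  assumes "closed (N :: ('x::metric_space \<times> 'p::metric_space) set)"
  shows "closed {x. (x,p) \<in> N}"
proof -
  have "{x. (x,p) \<in> N} = (\<lambda>x. (x,p)) -` N" by auto
  moreover have "closed ((\<lambda>x. (x,p)) -` N)"
    by (rule continuous_closed_vimage[OF assms]) (auto intro!: continuous_intros)
  ultimately show ?thesis by simp
qed

lemma omega_attractor:
  fixes \<phi> :: "real \<Rightarrow> 'p::metric_space \<Rightarrow> 'x::banach \<Rightarrow> 'x"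
  assumes flow: "is_flow \<theta>" and coc: "cocycle_semiflow \<phi> \<theta>"
    and N: "compact N" and N': "closed N'"
    and ne: "\<And>p. \<exists>x. (x,p) \<in> N"
    and T: "0 \<le> T" and abs: "\<And>z \<tau>. z \<in> N \<Longrightarrow> T \<le> \<tau> \<Longrightarrow> sk \<phi> \<theta> \<tau> z \<in> N'"
    and int: "\<And>p. {x. (x,p) \<in> N'} \<subseteq> interior {x. (x,p) \<in> N}"
  shows "\<exists>A. pullback_attractor \<phi> \<theta> A \<and> (\<forall>p. A p \<subseteq> {x. (x,p) \<in> N})"
proof -
  define Nf where "Nf q = {x. (x,q) \<in> N}" for q
  define N'f where "N'f q = {x. (x,q) \<in> N'}" for q
  define F where "F t p = \<phi> t (\<theta> (-t) p) ` Nf (\<theta> (-t) p)" for t p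
  define G where "G s p = (\<Union>t\<in>{s..}. F t p)" for s p
  define A where "A p = (\<Inter>s\<in>{T..}. closure (G s p))" for p
  have Nfc: "compact (Nf q)" for q unfolding Nf_def by (rule fiber_compact[OF N])
  have N'fc: "closed (N'f q)" for q unfolding N'f_def by (rule fiber_closed[OF N'])
  have N'N: "N'f q \<subseteq> Nf q" for q using int[of q] interior_subset unfolding N'f_def Nf_def by blast
  have F_sub: "F t p \<subseteq> N'f p" if "T \<le> t" for t p
  proof
    fix y assume "y \<in> F t p"
    then obtain x where x: "x \<in> Nf (\<theta> (-t) p)" "y = \<phi> t (\<theta> (-t) p) x" unfolding F_def by auto
    have "sk \<phi> \<theta> t (x, \<theta> (-t) p) \<in> N'" using abs[OF _ that] x(1) unfolding Nf_def by auto
    thus "y \<in> N'f p" using x(2) flow_facts(3)[OF flow] unfolding sk_def N'f_def by simp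
  qed
  have G_sub: "closure (G s p) \<subseteq> N'f p" if "T \<le> s" for s p
  proof -
    have "G s p \<subseteq> N'f p" unfolding G_def
    proof (rule UN_least)
      fix t assume "t \<in> {s..}" thus "F t p \<subseteq> N'f p" by (intro F_sub) (use that in auto)
    qed
    thus ?thesis by (rule closure_minimal[OF _ N'fc])
  qed
  have Gc: "compact (closure (G s p))" if "T \<le> s" for s p
  proof -
    have "closure (G s p) \<subseteq> Nf p" using G_sub[OF that] N'N by blast
    hence eq: "Nf p \<inter> closure (G s p) = closure (G s p)" by blast
    have "compact (Nf p \<inter> closure (G s p))" by (rule compact_Int_closed[OF Nfc closed_closure])
    thus ?thesis using eq by simp
  qed
  have G_mono: "G s' p \<subseteq> G s p" if "s \<le> s'" for s s' p unfolding G_def by (intro UN_mono) (use that in auto)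
  have G_ne: "G s p \<noteq> {}" if "0 \<le> s" for s p
  proof -
    obtain x where "(x, \<theta> (-s) p) \<in> N" using ne by blast
    hence "F s p \<noteq> {}" unfolding F_def Nf_def by auto
    thus ?thesis unfolding G_def by auto
  qed
  have A_ne: "A p \<noteq> {}" for p
    unfolding A_def
  proof (rule dec_inter)
    fix s assume s: "T \<le> s"
    show "compact (closure (G s p))" by (rule Gc[OF s])
  next
    fix s s' assume "T \<le> s" "s \<le> s'"
    show "closure (G s' p) \<subseteq> closure (G s p)" by (rule closure_mono[OF G_mono]) fact
  next
    fix s assume s: "T \<le> s"
    have "G s p \<noteq> {}" by (rule G_ne) (use s T in simp)
    thus "closure (G s p) \<noteq> {}" by simp
  qed
  have A_sub: "A p \<subseteq> N'f p" for p using G_sub[of T p] unfolding A_def by auto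
  have A_closed: "closed (A p)" for p unfolding A_def by auto
  have A_compact: "compact (A p)" for p
  proof -
    have "A p \<subseteq> Nf p" using A_sub N'N by blast
    hence eq: "Nf p \<inter> A p = A p" by blast
    have "compact (Nf p \<inter> A p)" by (rule compact_Int_closed[OF Nfc A_closed])
    thus ?thesis using eq by simp
  qed
  have F_img: "\<phi> \<tau> p ` F t p = F (t+\<tau>) (\<theta> \<tau> p)" if "0 \<le> t" "0 \<le> \<tau>" for t \<tau> p
  proof -
    have e1: "\<theta> (-(t+\<tau>)) (\<theta> \<tau> p) = \<theta> (-t) p" using flow_facts(5)[OF flow] by simp
    have "\<phi> (t+\<tau>) (\<theta> (-t) p) x = \<phi> \<tau> p (\<phi> t (\<theta> (-t) p) x)" for x
      using coc that flow_facts(3)[OF flow] unfolding cocycle_semiflow_def by (metis add.commute)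
    thus ?thesis unfolding F_def e1 by (auto simp: image_image)
  qed
  have G_img: "\<phi> \<tau> p ` G s p = G (s+\<tau>) (\<theta> \<tau> p)" if "0 \<le> s" "0 \<le> \<tau>" for s \<tau> p
  proof -
    have "\<phi> \<tau> p ` G s p = (\<Union>t\<in>{s..}. \<phi> \<tau> p ` F t p)" unfolding G_def by (rule image_UN)
    also have "\<dots> = (\<Union>t\<in>{s..}. F (t+\<tau>) (\<theta> \<tau> p))"
    proof (rule SUP_cong[OF refl])
      fix t assume "t \<in> {s..}" thus "\<phi> \<tau> p ` F t p = F (t+\<tau>) (\<theta> \<tau> p)" by (intro F_img) (use that in auto)
    qed
    also have "\<dots> = (\<Union>t\<in>(\<lambda>t. t+\<tau>) ` {s..}. F t (\<theta> \<tau> p))" by auto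
    also have "(\<lambda>t. t+\<tau>) ` {s..} = {s+\<tau>..}" by (auto simp: image_iff intro!: bexI[where x="_ - \<tau>"])
    finally show ?thesis unfolding G_def .
  qed
  have cl_img: "\<phi> \<tau> p ` closure (G s p) = closure (G (s+\<tau>) (\<theta> \<tau> p))" if "T \<le> s" "0 \<le> \<tau>" for s \<tau> p
    using image_closure_compact[OF phi_cont1[OF coc that(2)] Gc[OF that(1)]] G_img that T by simp
  have inv: "\<phi> \<tau> p ` A p = A (\<theta> \<tau> p)" if "0 \<le> \<tau>" for \<tau> p
  proof
    show "\<phi> \<tau> p ` A p \<subseteq> A (\<theta> \<tau> p)"
    proof (clarsimp simp: A_def)
      fix x s assume x: "\<forall>s\<in>{T..}. x \<in> closure (G s p)" and s: "T \<le> s"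
      have "\<phi> \<tau> p x \<in> closure (G (s+\<tau>) (\<theta> \<tau> p))" using cl_img[OF s that] x s by auto
      moreover have "closure (G (s+\<tau>) (\<theta> \<tau> p)) \<subseteq> closure (G s (\<theta> \<tau> p))"
        using G_mono that by (simp add: closure_mono)
      ultimately show "\<phi> \<tau> p x \<in> closure (G s (\<theta> \<tau> p))" by blast
    qed
    show "A (\<theta> \<tau> p) \<subseteq> \<phi> \<tau> p ` A p"
    proof
      fix y assume y: "y \<in> A (\<theta> \<tau> p)"
      define C where "C s = closure (G s p) \<inter> \<phi> \<tau> p -` {y}" for s
      have "(\<Inter>s\<in>{T..}. C s) \<noteq> {}"
      proof (rule dec_inter)
        fix s assume s: "T \<le> s"
        have "closed (\<phi> \<tau> p -` {y})"
          by (rule continuous_closed_vimage) (use phi_cont1[OF coc that] in \<open>auto simp: continuous_on_eq_continuous_at\<close>)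
        thus "compact (C s)" unfolding C_def using Gc[OF s] by (rule compact_Int_closed[rotated])
        have "y \<in> closure (G (s+\<tau>) (\<theta> \<tau> p))" using y s that unfolding A_def by auto
        hence "y \<in> \<phi> \<tau> p ` closure (G s p)" using cl_img[OF s that] by simp
        then obtain x where "x \<in> closure (G s p)" "\<phi> \<tau> p x = y" by auto
        hence "x \<in> C s" unfolding C_def by simp
        thus "C s \<noteq> {}" by blast
      next
        fix s s' assume "T \<le> s" "s \<le> s'"
        hence "closure (G s' p) \<subseteq> closure (G s p)" by (intro closure_mono G_mono)
        thus "C s' \<subseteq> C s" unfolding C_def by blast
      qed
      then obtain x where "x \<in> (\<Inter>s\<in>{T..}. C s)" by blast
      hence "x \<in> A p" "\<phi> \<tau> p x = y" unfolding C_def A_def by auto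
      thus "y \<in> \<phi> \<tau> p ` A p" by blast
    qed
  qed
  have nbhd: "na_neighborhood Nf A"
    unfolding na_neighborhood_def
  proof
    fix p
    have "closure (A p) = A p" by (rule closure_closed[OF A_closed])
    moreover have "N'f p \<subseteq> interior (Nf p)" using int[of p] unfolding N'f_def Nf_def .
    ultimately show "closure (A p) \<subseteq> interior (Nf p)" using A_sub[of p] by simp
  qed
  have attr: "pullback_attracts \<phi> \<theta> A Nf"
    unfolding pullback_attracts_def
  proof (intro allI ennreal_tendsto_zeroI)
    fix p and e :: real assume e: "e > 0"
    define C where "C s = closure (G s p) \<inter> {x. e \<le> infdist x (A p)}" for s
    have emp: "\<not> (\<Inter>s\<in>{T..}. C s) \<noteq> {}"
    proof
      assume "(\<Inter>s\<in>{T..}. C s) \<noteq> {}"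
      then obtain x where "x \<in> (\<Inter>s\<in>{T..}. C s)" by blast
      hence "x \<in> A p" "e \<le> infdist x (A p)" unfolding C_def A_def by auto
      thus False using e by simp
    qed
    then obtain s where s: "T \<le> s" "C s = {}"
    proof (cases "\<exists>s. T \<le> s \<and> C s = {}")
      case False
      have "(\<Inter>s\<in>{T..}. C s) \<noteq> {}"
      proof (rule dec_inter)
        fix s assume s: "T \<le> s"
        have "closed {x. e \<le> infdist x (A p)}"
          by (rule closed_Collect_le) (auto intro!: continuous_intros)
        thus "compact (C s)" unfolding C_def using Gc[OF s] by (rule compact_Int_closed[rotated])
        show "C s \<noteq> {}" using False s by auto
      next
        fix s s' assume "T \<le> s" "s \<le> s'"
        hence "closure (G s' p) \<subseteq> closure (G s p)" by (intro closure_mono G_mono)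
        thus "C s' \<subseteq> C s" unfolding C_def by blast
      qed
      thus ?thesis using emp by blast
    qed auto
    show "eventually (\<lambda>t. hsemi (\<phi> t (\<theta> (- t) p) ` Nf (\<theta> (- t) p)) (A p) \<le> ennreal e) at_top"
      unfolding eventually_at_top_linorder
    proof (intro exI allI impI)
      fix t assume t: "s \<le> t"
      show "hsemi (\<phi> t (\<theta> (- t) p) ` Nf (\<theta> (- t) p)) (A p) \<le> ennreal e"
        unfolding hsemi_def
      proof (rule SUP_least)
        fix x assume "x \<in> \<phi> t (\<theta> (- t) p) ` Nf (\<theta> (- t) p)"
        hence "x \<in> G s p" using t unfolding G_def F_def by auto
        hence "infdist x (A p) < e" using s closure_subset unfolding C_def by fastforce
        then obtain a where a: "a \<in> A p" "dist x a < e" using A_ne by (meson infdist_lessE)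
        have "(INF y\<in>A p. ennreal (norm (x - y))) \<le> ennreal (norm (x - a))" by (rule INF_lower[OF a(1)])
        also have "\<dots> \<le> ennreal e" using a(2) by (intro ennreal_leI) (simp add: dist_norm)
        finally show "(INF y\<in>A p. ennreal (norm (x - y))) \<le> ennreal e" .
      qed
    qed
  qed
  have "pullback_attractor \<phi> \<theta> A"
    unfolding pullback_attractor_def na_compact_def na_invariant_def
    using A_compact A_ne inv nbhd attr by blast
  moreover have "\<forall>p. A p \<subseteq> {x. (x,p) \<in> N}" using A_sub N'N unfolding Nf_def by blast
  ultimately show ?thesis by blast
qed

lemma l0_analysis:
  fixes \<phi> :: "real \<Rightarrow> 'p::metric_space \<Rightarrow> 'x::banach \<Rightarrow> 'x"
  assumes flow: "is_flow \<theta>" and coc: "cocycle_semiflow \<phi> \<theta>"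
    and K: "compact K" and K_def: "K = {(x,p). x \<in> U p}"
    and AA_def: "AA = {(x,p). x \<in> A0 p}"
    and AK: "AA \<subseteq> interior K"
    and A0c: "na_compact A0"
    and inv: "na_invariant \<phi> \<theta> A0"
    and attr: "pullback_attracts \<phi> \<theta> A0 U"
  obtains r T where "compact AA" "AA \<noteq> {}" "r > 0" "T > 0" "\<And>z. infdist z AA \<le> r \<Longrightarrow> z \<in> K"
           "\<And>z \<tau>. infdist z AA \<le> r \<Longrightarrow> T \<le> \<tau> \<Longrightarrow> infdist (sk \<phi> \<theta> \<tau> z) AA < r/2"
proof -
  define \<pi> where "\<pi> = sk \<phi> \<theta>"
  define D where "D s = {w \<in> K. \<forall>\<sigma>\<in>{0..s}. \<pi> \<sigma> w \<in> K}" for s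
  define Q where "Q s = \<pi> s ` D s" for s
  have AK': "AA \<subseteq> K" using AK interior_subset by blast
  have semi: "\<pi> (t+s) w = \<pi> t (\<pi> s w)" if "0 \<le> t" "0 \<le> s" for t s w
    unfolding \<pi>_def by (rule sk_semigroup[OF flow coc that])
  have pi0: "\<pi> 0 w = w" for w unfolding \<pi>_def by (rule sk_zero[OF flow coc])
  have picont: "continuous_on UNIV (\<pi> t)" if "0 \<le> t" for t unfolding \<pi>_def by (rule sk_cont1[OF flow coc that])
  have Qc: "compact (Q s)" if "0 \<le> s" for s
  proof -
    have eq: "D s = K \<inter> (\<Inter>\<sigma>\<in>{0..s}. \<pi> \<sigma> -` K)" unfolding D_def by auto
    have "closed (\<pi> \<sigma> -` K)" if "\<sigma> \<in> {0..s}" for \<sigma>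
    proof (rule continuous_closed_vimage[OF compact_imp_closed[OF K]])
      fix x have "continuous_on UNIV (\<pi> \<sigma>)" using picont[of \<sigma>] that by simp
      thus "isCont (\<pi> \<sigma>) x" by (simp add: continuous_on_eq_continuous_at del: split_paired_All)
    qed
    hence "closed (\<Inter>\<sigma>\<in>{0..s}. \<pi> \<sigma> -` K)" by (intro closed_INT) auto
    hence cD: "compact (D s)" unfolding eq by (rule compact_Int_closed[OF K])
    show ?thesis unfolding Q_def
      by (rule compact_continuous_image[OF continuous_on_subset[OF picont[OF that]] cD]) simp
  qed
  have Qmem: "\<pi> \<tau> w \<in> Q s" if s: "0 \<le> s" "s \<le> \<tau>" and orb: "\<forall>\<sigma>\<in>{0..\<tau>}. \<pi> \<sigma> w \<in> K" for s \<tau> w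
  proof -
    define w' where "w' = \<pi> (\<tau> - s) w"
    have "w' \<in> K" unfolding w'_def using orb s by auto
    moreover have "\<pi> \<sigma> w' \<in> K" if "\<sigma> \<in> {0..s}" for \<sigma>
    proof -
      have "\<pi> \<sigma> w' = \<pi> (\<sigma> + (\<tau> - s)) w" unfolding w'_def using that s by (intro semi[symmetric]) auto
      thus ?thesis using orb that s by auto
    qed
    ultimately have "w' \<in> D s" unfolding D_def by blast
    moreover have "\<pi> s w' = \<pi> \<tau> w" unfolding w'_def using semi[of s "\<tau> - s" w] s by simp
    ultimately show ?thesis unfolding Q_def by (metis image_eqI)
  qed
  have Dorb: "\<forall>\<sigma>\<in>{0..s}. \<pi> \<sigma> w \<in> K" if "w \<in> D s" for s w using that unfolding D_def by blast
  have Q_mono: "Q s' \<subseteq> Q s" if "0 \<le> s" "s \<le> s'" for s s'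
  proof
    fix z assume "z \<in> Q s'"
    then obtain w where w: "w \<in> D s'" "z = \<pi> s' w" unfolding Q_def by auto
    show "z \<in> Q s" unfolding w(2) by (rule Qmem[OF that Dorb[OF w(1)]])
  qed
  have fwd: "\<pi> \<tau> a \<in> AA" if aA: "a \<in> AA" "0 \<le> \<tau>" for a \<tau>
  proof -
    obtain y q where a: "a = (y,q)" "y \<in> A0 q" using aA(1) unfolding AA_def by auto
    have "\<phi> \<tau> q ` A0 q = A0 (\<theta> \<tau> q)" using inv aA(2) unfolding na_invariant_def by blast
    hence "\<phi> \<tau> q y \<in> A0 (\<theta> \<tau> q)" using a(2) by blast
    thus ?thesis unfolding a(1) \<pi>_def sk_def AA_def by simp
  qed
  have AQ: "AA \<subseteq> Q s" if "0 \<le> s" for s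
  proof
    fix z assume z: "z \<in> AA"
    obtain x q where xq: "z = (x,q)" "x \<in> A0 q" using z unfolding AA_def by auto
    define q' where "q' = \<theta> (-s) q"
    have "\<phi> s q' ` A0 q' = A0 (\<theta> s q')" using inv that unfolding na_invariant_def by blast
    also have "\<theta> s q' = q" unfolding q'_def by (rule flow_facts(3)[OF flow])
    finally obtain y where y: "y \<in> A0 q'" "x = \<phi> s q' y" using xq(2) by (metis imageE)
    have yA: "(y,q') \<in> AA" using y(1) unfolding AA_def by simp
    have "\<forall>\<sigma>\<in>{0..s}. \<pi> \<sigma> (y,q') \<in> K" using fwd[OF yA] AK' by auto
    hence "\<pi> s (y,q') \<in> Q s" by (intro Qmem[OF that order_refl])
    moreover have "\<pi> s (y,q') = z" unfolding \<pi>_def sk_def xq(1) y(2) using \<open>\<theta> s q' = q\<close> by simp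
    ultimately show "z \<in> Q s" by simp
  qed
  have QA: "z \<in> AA" if allQ: "\<And>s. 0 \<le> s \<Longrightarrow> z \<in> Q s" for z
  proof -
    obtain \<xi> q where zq: "z = (\<xi>, q)" by (cases z)
    have "\<xi> \<in> closure (A0 q)"
      unfolding closure_approachable
    proof (intro allI impI)
      fix e :: real assume e: "e > 0"
      have "((\<lambda>t. hsemi (\<phi> t (\<theta> (-t) q) ` U (\<theta> (-t) q)) (A0 q)) \<longlongrightarrow> 0) at_top"
        using attr unfolding pullback_attracts_def by blast
      hence "eventually (\<lambda>t. hsemi (\<phi> t (\<theta> (-t) q) ` U (\<theta> (-t) q)) (A0 q) < ennreal e) at_top"
        by (rule order_tendstoD) (use e in simp)
      then obtain s0 where s0: "\<And>t. t \<ge> s0 \<Longrightarrow> hsemi (\<phi> t (\<theta> (-t) q) ` U (\<theta> (-t) q)) (A0 q) < ennreal e"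
        unfolding eventually_at_top_linorder by blast
      define s where "s = max s0 0"
      have s: "0 \<le> s" "s0 \<le> s" unfolding s_def by auto
      obtain w where w: "w \<in> D s" "z = \<pi> s w" using allQ[OF s(1)] unfolding Q_def by auto
      obtain y p' where yp: "w = (y,p')" by (cases w)
      have "\<theta> s p' = q" using w(2) unfolding yp zq \<pi>_def sk_def by simp
      hence p': "p' = \<theta> (-s) q" using flow_facts(4)[OF flow, of s p'] by simp
      have yU: "y \<in> U p'" using w(1) unfolding D_def K_def yp by auto
      have xi: "\<xi> = \<phi> s (\<theta> (-s) q) y" using w(2) unfolding yp zq \<pi>_def sk_def p' by simp
      have "(INF a\<in>A0 q. ennreal (norm (\<xi> - a))) \<le> hsemi (\<phi> s (\<theta> (-s) q) ` U (\<theta> (-s) q)) (A0 q)"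
        unfolding hsemi_def xi by (rule SUP_upper) (use yU p' in auto)
      also have "\<dots> < ennreal e" by (rule s0[OF s(2)])
      finally obtain a where a: "a \<in> A0 q" "ennreal (norm (\<xi> - a)) < ennreal e" by (auto simp: INF_less_iff)
      hence "norm (\<xi> - a) < e" by (simp add: ennreal_less_iff)
      hence "dist a \<xi> < e" by (simp add: dist_norm norm_minus_commute)
      thus "\<exists>a\<in>A0 q. dist a \<xi> < e" using a(1) by blast
    qed
    moreover have "closed (A0 q)" using A0c unfolding na_compact_def by (simp add: compact_imp_closed)
    ultimately have "\<xi> \<in> A0 q" by simp
    thus ?thesis unfolding zq AA_def by simp
  qed
  have AA_eq: "AA = (\<Inter>s\<in>{0..}. Q s)" using AQ QA by auto
  have AAcl: "closed AA" unfolding AA_eq using Qc by (intro closed_INT) (auto intro: compact_imp_closed)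
  have AAc: "compact AA"
  proof -
    have "compact (K \<inter> AA)" by (rule compact_Int_closed[OF K AAcl])
    moreover have "K \<inter> AA = AA" using AK' by blast
    ultimately show ?thesis by simp
  qed
  have AAne: "AA \<noteq> {}"
  proof -
    obtain x where "x \<in> A0 undefined" using A0c unfolding na_compact_def by blast
    thus ?thesis unfolding AA_def by auto
  qed
  have Qopen: "\<exists>s\<ge>0. Q s \<subseteq> Op" if Op: "open Op" "AA \<subseteq> Op" for Op
  proof (rule ccontr)
    assume H: "\<not> (\<exists>s\<ge>0. Q s \<subseteq> Op)"
    have "(\<Inter>s\<in>{0..}. Q s - Op) \<noteq> {}"
    proof (rule dec_inter)
      fix s :: real assume s: "0 \<le> s"
      show "compact (Q s - Op)" by (rule compact_diff[OF Qc[OF s] Op(1)])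
      show "Q s - Op \<noteq> {}" using H s by auto
    next
      fix s s' :: real assume "0 \<le> s" "s \<le> s'" thus "Q s' - Op \<subseteq> Q s - Op" using Q_mono by blast
    qed
    then obtain z where "z \<in> (\<Inter>s\<in>{0..}. Q s - Op)" by blast
    hence "z \<in> AA" "z \<notin> Op" using QA by auto
    thus False using Op(2) by blast
  qed
  obtain e where e: "e > 0" "(\<Union>x\<in>AA. ball x e) \<subseteq> interior K"
    using compact_subset_open_imp_ball_epsilon_subset[OF AAc open_interior AK] by blast
  have inK: "z \<in> K" if zd: "infdist z AA < e" for z
  proof -
    obtain a where "a \<in> AA" "dist z a < e" using infdist_lessE[OF zd AAne] by blast
    hence "z \<in> interior K" using e(2) by (force simp: dist_commute)
    thus ?thesis using interior_subset by blast
  qed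
  define \<rho> where "\<rho> = e/2"
  have \<rho>: "\<rho> > 0" "2*\<rho> = e" unfolding \<rho>_def using e by auto
  have opn: "open {z. infdist z AA < c}" for c
    by (intro open_Collect_less continuous_intros continuous_on_infdist continuous_on_id)
  have Asub: "AA \<subseteq> {z. infdist z AA < c}" if "c > 0" for c using that by auto
  obtain s0 where s0: "0 \<le> s0" "Q s0 \<subseteq> {z. infdist z AA < \<rho>}"
    using Qopen[OF opn Asub[OF \<rho>(1)]] by blast
  define PP where "PP tw = \<pi> (fst tw) (snd tw)" for tw
  have Pic: "continuous_on ({0..} \<times> UNIV) PP" unfolding PP_def \<pi>_def by (rule sk_cont[OF flow coc])
  have uc: "uniformly_continuous_on ({0..S} \<times> K) PP" for S
    by (rule compact_uniformly_continuous[OF continuous_on_subset[OF Pic]])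
       (auto intro: compact_Times K)
  obtain d where d: "d > 0" "\<And>x x'. x \<in> {0..s0} \<times> K \<Longrightarrow> x' \<in> {0..s0} \<times> K \<Longrightarrow> dist x' x < d \<Longrightarrow> dist (PP x') (PP x) < \<rho>"
    using uc[of s0] \<rho>(1) unfolding uniformly_continuous_on_def by metis
  obtain d' where d': "d' > 0" "\<And>x x'. x \<in> {0..1} \<times> K \<Longrightarrow> x' \<in> {0..1} \<times> K \<Longrightarrow> dist x' x < d' \<Longrightarrow> dist (PP x') (PP x) < \<rho>"
    using uc[of 1] \<rho>(1) unfolding uniformly_continuous_on_def by metis
  define r where "r = min (\<rho>/2) (d/2)"
  have r: "r > 0" "r < e" "r < d" "r \<le> \<rho>" unfolding r_def using \<rho> d by auto
  have R: "infdist (\<pi> \<tau> w) AA < \<rho>" if w: "infdist w AA \<le> r" and \<tau>: "0 \<le> \<tau>" and orb: "\<forall>\<sigma>\<in>{0..\<tau>}. \<pi> \<sigma> w \<in> K" for w \<tau>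
  proof (cases "\<tau> \<le> s0")
    case True
    have wK: "w \<in> K" using inK w r by simp
    obtain a where a: "a \<in> AA" "dist w a < d" using infdist_lessE[of w AA d] w r AAne by force
    have aK: "a \<in> K" using a(1) AK' by blast
    have "dist (PP (\<tau>, w)) (PP (\<tau>, a)) < \<rho>"
      by (rule d(2)) (use True \<tau> wK aK a(2) in \<open>auto simp: dist_Pair_Pair\<close>)
    hence "dist (\<pi> \<tau> w) (\<pi> \<tau> a) < \<rho>" unfolding PP_def by simp
    moreover have "infdist (\<pi> \<tau> w) AA \<le> dist (\<pi> \<tau> w) (\<pi> \<tau> a)" by (rule infdist_le[OF fwd[OF a(1) \<tau>]])
    ultimately show ?thesis by simp
  next
    case False
    have "\<pi> \<tau> w \<in> Q s0" by (rule Qmem) (use False s0 orb in auto)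
    thus ?thesis using s0 by blast
  qed
  define h where "h = min 1 (d'/2)"
  have h: "h > 0" "h \<le> 1" "h < d'" unfolding h_def using d' by auto
  have P: "\<forall>w. infdist w AA \<le> r \<longrightarrow> (\<forall>\<sigma>\<in>{0..real n * h}. \<pi> \<sigma> w \<in> K)" for n :: nat
  proof (induction n)
    case 0
    show ?case using inK r by (auto simp: pi0)
  next
    case (Suc n)
    show ?case
    proof (intro allI impI ballI)
      fix w \<sigma> assume w: "infdist w AA \<le> r" and \<sigma>: "\<sigma> \<in> {0..real (Suc n) * h}"
      have IHw: "\<forall>\<sigma>\<in>{0..real n * h}. \<pi> \<sigma> w \<in> K" using Suc.IH w by blast
      show "\<pi> \<sigma> w \<in> K"
      proof (cases "\<sigma> \<le> real n * h")
        case True thus ?thesis using IHw \<sigma> by auto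
      next
        case False
        define z where "z = \<pi> (real n * h) w"
        have nh: "0 \<le> real n * h" using h by simp
        have zr: "infdist z AA < \<rho>" unfolding z_def by (rule R[OF w nh IHw])
        have zK: "z \<in> K" using inK zr \<rho> by simp
        have eq: "\<pi> \<sigma> w = \<pi> (\<sigma> - real n * h) z" unfolding z_def using semi[of "\<sigma> - real n * h" "real n * h" w] nh False by simp
        have hs: "\<sigma> - real n * h \<le> h" using \<sigma> by (simp add: algebra_simps)
        have "dist (PP (\<sigma> - real n * h, z)) (PP (0, z)) < \<rho>"
          by (rule d'(2)) (use zK False hs h in \<open>auto simp: dist_Pair_Pair\<close>)
        hence "dist (\<pi> \<sigma> w) z < \<rho>" unfolding PP_def eq using pi0 by simp
        hence "infdist (\<pi> \<sigma> w) AA < e" using infdist_triangle[of "\<pi> \<sigma> w" AA z] zr \<rho> by simp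
        thus ?thesis by (rule inK)
      qed
    qed
  qed
  have stab: "\<forall>\<sigma>\<in>{0..\<tau>}. \<pi> \<sigma> w \<in> K" if w: "infdist w AA \<le> r" for w \<tau>
  proof -
    obtain n :: nat where n: "\<tau> / h \<le> real n" using real_arch_simple by blast
    hence "\<tau> \<le> real n * h" using h by (simp add: field_simps)
    moreover have "\<forall>\<sigma>\<in>{0..real n * h}. \<pi> \<sigma> w \<in> K" using P[of n] w by blast
    ultimately show ?thesis by auto
  qed
  have r2: "r/2 > 0" using r by simp
  obtain s1 where s1: "0 \<le> s1" "Q s1 \<subseteq> {z. infdist z AA < r/2}"
    using Qopen[OF opn Asub[OF r2]] by blast
  define T where "T = max s1 1"
  have T0: "T > 0" unfolding T_def by simp
  have fin: "infdist (sk \<phi> \<theta> \<tau> z) AA < r/2" if "infdist z AA \<le> r" "T \<le> \<tau>" for z \<tau>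
  proof -
    have "\<pi> \<tau> z \<in> Q s1" by (rule Qmem[OF s1(1) _ stab[OF that(1)]]) (use that T_def in auto)
    thus ?thesis using s1 unfolding \<pi>_def by blast
  qed
  have fK: "z \<in> K" if "infdist z AA \<le> r" for z using inK r that by auto
  show thesis by (rule that[OF AAc AAne r(1) T0 fK fin])
qed

theorem theorem3p1:
  fixes \<phi> :: "real \<Rightarrow> real \<Rightarrow> 'p::metric_space \<Rightarrow> 'x::banach \<Rightarrow> 'x"
    and \<theta> :: "real \<Rightarrow> 'p \<Rightarrow> 'p"
    and l\<^sub>0 :: real and I :: "real set"
    and A\<^sub>0 U :: "'p \<Rightarrow> 'x set"
  assumes flow: "is_flow \<theta>"
    and I: "open I" "l\<^sub>0 \<in> I" "is_interval I"
    and cocycle: "\<And>l. l \<in> I \<Longrightarrow> cocycle_semiflow (\<phi> l) \<theta>"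
    and H1: "compact (UNIV :: 'p set)"
    and H2: "\<And>T B \<epsilon>. T > 0 \<Longrightarrow> compact B \<Longrightarrow> \<epsilon> > 0 \<Longrightarrow>
               \<exists>\<eta>>0. \<forall>l\<in>I. \<bar>l - l\<^sub>0\<bar> < \<eta> \<longrightarrow>
                 (\<forall>t\<in>{0..T}. \<forall>x\<in>B. \<forall>p. norm (\<phi> l t p x - \<phi> l\<^sub>0 t p x) < \<epsilon>)"
    and A0_compact: "na_compact A\<^sub>0"
    and A0_inv: "na_invariant (\<phi> l\<^sub>0) \<theta> A\<^sub>0"
    and U_nbhd: "na_neighborhood U A\<^sub>0"
    and A0_attr: "pullback_attracts (\<phi> l\<^sub>0) \<theta> A\<^sub>0 U"
    and UU_compact: "compact {(x, p). x \<in> U p}"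
    and UU_nbhd: "closure {(x, p). x \<in> A\<^sub>0 p} \<subseteq> interior {(x, p). x \<in> U p}"
  shows "\<exists>\<delta>>0. \<exists>A :: real \<Rightarrow> 'p \<Rightarrow> 'x set.
           (\<forall>l. \<bar>l - l\<^sub>0\<bar> < \<delta> \<longrightarrow> pullback_attractor (\<phi> l) \<theta> (A l))
         \<and> (\<forall>p. ((\<lambda>l. hsemi (A l p) (\<Union>q. A\<^sub>0 q)) \<longlongrightarrow> 0) (at l\<^sub>0))
         \<and> (na_forward_invariant (\<phi> l\<^sub>0) \<theta> U \<longrightarrow>
              (\<forall>p. ((\<lambda>l. hsemi (A l p) (A\<^sub>0 p)) \<longlongrightarrow> 0) (at l\<^sub>0)))"
proof -
  define K where "K = {(x, p). x \<in> U p}"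
  define AA where "AA = {(x, p). x \<in> A\<^sub>0 p}"
  have AK: "AA \<subseteq> interior K"
    using UU_nbhd closure_subset[of "{(x, p). x \<in> A\<^sub>0 p}"] unfolding AA_def K_def by (rule order_trans[rotated])
  have K: "compact K" unfolding K_def by (rule UU_compact)
  have coc0: "cocycle_semiflow (\<phi> l\<^sub>0) \<theta>" by (rule cocycle[OF I(2)])
  obtain r T where AAc: "compact AA" and AAne: "AA \<noteq> {}" and r: "r > 0" and T: "T > 0"
    and NK: "\<And>z. infdist z AA \<le> r \<Longrightarrow> z \<in> K"
    and att: "\<And>z \<tau>. infdist z AA \<le> r \<Longrightarrow> T \<le> \<tau> \<Longrightarrow> infdist (sk (\<phi> l\<^sub>0) \<theta> \<tau> z) AA < r/2"
    by (rule l0_analysis[OF flow coc0 K K_def AA_def AK A0_compact A0_inv A0_attr]) (rule that)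
  have BK: "compact (fst ` K)" by (intro compact_continuous_image continuous_intros K)
  have "\<exists>\<eta>>0. \<forall>l\<in>I. \<bar>l - l\<^sub>0\<bar> < \<eta> \<longrightarrow>
                 (\<forall>t\<in>{0..2*T}. \<forall>x\<in>fst ` K. \<forall>p. norm (\<phi> l t p x - \<phi> l\<^sub>0 t p x) < r/4)"
    by (rule H2) (use T BK r in simp_all)
  then obtain \<eta> where \<eta>: "\<eta> > 0" "\<forall>l\<in>I. \<bar>l - l\<^sub>0\<bar> < \<eta> \<longrightarrow>
                 (\<forall>t\<in>{0..2*T}. \<forall>x\<in>fst ` K. \<forall>p. norm (\<phi> l t p x - \<phi> l\<^sub>0 t p x) < r/4)"
    by (elim exE conjE) (rule that)
  obtain \<epsilon>0 where \<epsilon>0: "\<epsilon>0 > 0" "ball l\<^sub>0 \<epsilon>0 \<subseteq> I" using I(1,2) open_contains_ball by blast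
  have inI: "l \<in> I" if "\<bar>l - l\<^sub>0\<bar> < \<epsilon>0" for l using \<epsilon>0 that by (auto simp: dist_real_def)
  define \<delta> where "\<delta> = min \<eta> \<epsilon>0"
  have \<delta>: "\<delta> > 0" "\<delta> \<le> \<eta>" "\<delta> \<le> \<epsilon>0" unfolding \<delta>_def using \<eta> \<epsilon>0 by auto
  define N where "N = {z. infdist z AA \<le> r}"
  define N' where "N' = {z. infdist z AA \<le> 3*r/4}"
  have clo: "closed {z. infdist z AA \<le> c}" for c
    by (intro closed_Collect_le continuous_intros continuous_on_infdist continuous_on_id)
  have Nc: "compact N"
  proof -
    have "compact (K \<inter> N)" unfolding N_def by (rule compact_Int_closed[OF K clo])
    moreover have "K \<inter> N = N" using NK unfolding N_def by blast
    ultimately show ?thesis by simp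
  qed
  have N'c: "closed N'" unfolding N'_def by (rule clo)
  have ne: "\<exists>x. (x,p) \<in> N" for p
  proof -
    obtain x where "x \<in> A\<^sub>0 p" using A0_compact unfolding na_compact_def by blast
    hence "(x,p) \<in> AA" unfolding AA_def by simp
    hence "infdist (x,p) AA = 0" by simp
    thus ?thesis unfolding N_def using r by (intro exI[of _ x]) simp
  qed
  have int: "{x. (x,p) \<in> N'} \<subseteq> interior {x. (x,p) \<in> N}" for p
  proof
    fix x assume x: "x \<in> {x. (x,p) \<in> N'}"
    have "ball x (r/4) \<subseteq> {x. (x,p) \<in> N}"
    proof
      fix y assume y: "y \<in> ball x (r/4)"
      have "infdist (y,p) AA \<le> infdist (x,p) AA + dist (y,p) (x,p)" by (rule infdist_triangle)
      also have "dist (y,p) (x,p) = dist y x" by (simp add: dist_Pair_Pair)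
      finally show "y \<in> {x. (x,p) \<in> N}" using x y unfolding N_def N'_def by (simp add: dist_commute)
    qed
    thus "x \<in> interior {x. (x,p) \<in> N}" unfolding mem_interior using r by (intro exI[of _ "r/4"]) simp
  qed
  have absorb: "sk (\<phi> l) \<theta> \<tau> z \<in> N'" if l: "\<bar>l - l\<^sub>0\<bar> < \<delta>" and z: "z \<in> N" and \<tau>: "T \<le> \<tau>" for l z \<tau>
  proof -
    have lI: "l \<in> I" using inI l \<delta> by simp
    have cocl: "cocycle_semiflow (\<phi> l) \<theta>" by (rule cocycle[OF lI])
    have close: "\<forall>t\<in>{0..2*T}. \<forall>x\<in>fst ` K. \<forall>p. norm (\<phi> l t p x - \<phi> l\<^sub>0 t p x) < r/4"
      using \<eta>(2) lI l \<delta> by auto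
    have base: "infdist (sk (\<phi> l) \<theta> \<tau> z) AA < 3*r/4" if z: "z \<in> N" and \<tau>: "T \<le> \<tau>" "\<tau> \<le> 2*T" for z \<tau>
    proof -
      obtain x p where zp: "z = (x,p)" by (cases z)
      have "(x,p) \<in> K" using NK z unfolding N_def zp by blast
      hence xK: "x \<in> fst ` K" by (rule rev_image_eqI) simp
      have tin: "\<tau> \<in> {0..2*T}" using \<tau> T by simp
      have nrm: "norm (\<phi> l \<tau> p x - \<phi> l\<^sub>0 \<tau> p x) < r/4" using close tin xK by blast
      have "dist (sk (\<phi> l) \<theta> \<tau> z) (sk (\<phi> l\<^sub>0) \<theta> \<tau> z) = norm (\<phi> l \<tau> p x - \<phi> l\<^sub>0 \<tau> p x)"
        unfolding zp sk_def by (simp add: dist_Pair_Pair dist_norm)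
      moreover have "infdist (sk (\<phi> l) \<theta> \<tau> z) AA \<le> infdist (sk (\<phi> l\<^sub>0) \<theta> \<tau> z) AA + dist (sk (\<phi> l) \<theta> \<tau> z) (sk (\<phi> l\<^sub>0) \<theta> \<tau> z)"
        by (rule infdist_triangle)
      moreover have "infdist (sk (\<phi> l\<^sub>0) \<theta> \<tau> z) AA < r/2" using att z \<tau> unfolding N_def by auto
      ultimately show ?thesis using nrm by simp
    qed
    have ind: "\<forall>z\<in>N. \<forall>\<tau>. T \<le> \<tau> \<and> \<tau> \<le> (real n + 2) * T \<longrightarrow> infdist (sk (\<phi> l) \<theta> \<tau> z) AA < 3*r/4" for n :: nat
    proof (induction n)
      case 0 show ?case using base by simp
    next
      case (Suc n)
      show ?case
      proof (intro ballI allI impI)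
        fix z \<tau> assume z: "z \<in> N" and \<tau>: "T \<le> \<tau> \<and> \<tau> \<le> (real (Suc n) + 2) * T"
        show "infdist (sk (\<phi> l) \<theta> \<tau> z) AA < 3*r/4"
        proof (cases "\<tau> \<le> (real n + 2) * T")
          case True thus ?thesis using Suc.IH z \<tau> by blast
        next
          case False
          have zT: "sk (\<phi> l) \<theta> T z \<in> N"
            using base[OF z order_refl] T r unfolding N_def by simp
          have eq: "sk (\<phi> l) \<theta> \<tau> z = sk (\<phi> l) \<theta> (\<tau> - T) (sk (\<phi> l) \<theta> T z)"
            using sk_semigroup[OF flow cocl, of "\<tau> - T" T z] \<tau> T by simp
          have "T \<le> \<tau> - T \<and> \<tau> - T \<le> (real n + 2) * T" proof -
            have nn: "0 \<le> T * real n" using T by simp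
            have a1: "(real n + 2) * T < \<tau>" using False by simp
            have a2: "(real n + 2) * T = T * real n + 2 * T" by (simp add: algebra_simps)
            have a3: "\<tau> \<le> (real n + 2) * T + T" using \<tau> by (simp add: algebra_simps)
            show ?thesis using a1 a2 a3 nn by linarith
          qed
          thus ?thesis unfolding eq using Suc.IH zT by blast
        qed
      qed
    qed
    obtain n :: nat where n: "\<tau> / T \<le> real n" using real_arch_simple by blast
    hence "\<tau> \<le> (real n + 2) * T" using T by (simp add: field_simps)
    hence "infdist (sk (\<phi> l) \<theta> \<tau> z) AA < 3*r/4" using ind[of n] z \<tau> by blast
    thus ?thesis unfolding N'_def by simp
  qed
  define A where "A l = (SOME A. pullback_attractor (\<phi> l) \<theta> A \<and> (\<forall>p. A p \<subseteq> {x. (x,p) \<in> N}))" for l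
  have Al: "pullback_attractor (\<phi> l) \<theta> (A l) \<and> (\<forall>p. A l p \<subseteq> {x. (x,p) \<in> N})" if l: "\<bar>l - l\<^sub>0\<bar> < \<delta>" for l
  proof -
    have lI: "l \<in> I" using inI l \<delta> by simp
    have "\<exists>A. pullback_attractor (\<phi> l) \<theta> A \<and> (\<forall>p. A p \<subseteq> {x. (x,p) \<in> N})"
      by (rule omega_attractor[OF flow cocycle[OF lI] Nc N'c ne _ absorb[OF l] int]) (use T in auto)
    thus ?thesis unfolding A_def by (rule someI_ex)
  qed
  have AU: "A l p \<subseteq> U p" if l: "\<bar>l - l\<^sub>0\<bar> < \<delta>" for l p
  proof
    fix x assume "x \<in> A l p"
    hence "(x,p) \<in> N" using Al[OF l] by blast
    hence "(x,p) \<in> K" using NK unfolding N_def by blast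
    thus "x \<in> U p" unfolding K_def by simp
  qed
  have bound: "eventually (\<lambda>l. \<forall>a\<in>A l p. \<exists>y\<in>A\<^sub>0 p. norm (a - y) < \<epsilon>) (at l\<^sub>0)" if \<epsilon>: "\<epsilon> > 0" for p \<epsilon>
  proof -
    have "((\<lambda>t. hsemi (\<phi> l\<^sub>0 t (\<theta> (-t) p) ` U (\<theta> (-t) p)) (A\<^sub>0 p)) \<longlongrightarrow> 0) at_top"
      using A0_attr unfolding pullback_attracts_def by blast
    hence "eventually (\<lambda>t. hsemi (\<phi> l\<^sub>0 t (\<theta> (-t) p) ` U (\<theta> (-t) p)) (A\<^sub>0 p) < ennreal (\<epsilon>/2)) at_top"
      by (rule order_tendstoD) (use \<epsilon> in simp)
    then obtain t0 where t0: "\<And>t. t \<ge> t0 \<Longrightarrow> hsemi (\<phi> l\<^sub>0 t (\<theta> (-t) p) ` U (\<theta> (-t) p)) (A\<^sub>0 p) < ennreal (\<epsilon>/2)"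
      unfolding eventually_at_top_linorder by blast
    define t where "t = max t0 1"
    have t: "t > 0" "t0 \<le> t" unfolding t_def by auto
    obtain \<eta>2 where \<eta>2: "\<eta>2 > 0" "\<forall>l\<in>I. \<bar>l - l\<^sub>0\<bar> < \<eta>2 \<longrightarrow>
                 (\<forall>s\<in>{0..t}. \<forall>x\<in>fst ` K. \<forall>p. norm (\<phi> l s p x - \<phi> l\<^sub>0 s p x) < \<epsilon>/2)"
    proof -
      have "\<exists>\<eta>2>0. \<forall>l\<in>I. \<bar>l - l\<^sub>0\<bar> < \<eta>2 \<longrightarrow>
                 (\<forall>s\<in>{0..t}. \<forall>x\<in>fst ` K. \<forall>p. norm (\<phi> l s p x - \<phi> l\<^sub>0 s p x) < \<epsilon>/2)"
        by (rule H2) (use t BK \<epsilon> in simp_all)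
      thus thesis by (elim exE conjE) (rule that)
    qed
    define p' where "p' = \<theta> (-t) p"
    have tp': "\<theta> t p' = p" unfolding p'_def by (rule flow_facts(3)[OF flow])
    show ?thesis
      unfolding eventually_at
    proof (intro exI[of _ "min \<delta> \<eta>2"] conjI allI impI ballI)
      show "min \<delta> \<eta>2 > 0" using \<delta> \<eta>2 by simp
      fix l a assume l: "l \<noteq> l\<^sub>0 \<and> dist l l\<^sub>0 < min \<delta> \<eta>2" and a: "a \<in> A l p"
      have ld: "\<bar>l - l\<^sub>0\<bar> < \<delta>" "\<bar>l - l\<^sub>0\<bar> < \<eta>2" using l by (auto simp: dist_real_def)
      have lI: "l \<in> I" using inI ld \<delta> by simp
      have "\<phi> l t p' ` A l p' = A l (\<theta> t p')"
        using Al[OF ld(1)] t unfolding pullback_attractor_def na_invariant_def by auto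
      hence "a \<in> \<phi> l t p' ` A l p'" using a tp' by simp
      then obtain b where b: "b \<in> A l p'" "a = \<phi> l t p' b" by blast
      have bU: "b \<in> U p'" using AU[OF ld(1)] b(1) by blast
      hence "(b,p') \<in> K" unfolding K_def by simp
      hence "b \<in> fst ` K" by (rule rev_image_eqI) simp
      hence bK: "b \<in> fst ` K" .
      have tin: "t \<in> {0..t}" using t by simp
      have "\<forall>s\<in>{0..t}. \<forall>x\<in>fst ` K. \<forall>p. norm (\<phi> l s p x - \<phi> l\<^sub>0 s p x) < \<epsilon>/2" using \<eta>2(2) lI ld(2) by blast
      hence "norm (\<phi> l t p' b - \<phi> l\<^sub>0 t p' b) < \<epsilon>/2" using tin bK by blast
      hence n1: "norm (a - \<phi> l\<^sub>0 t p' b) < \<epsilon>/2" using b(2) by simp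
      have "(INF y\<in>A\<^sub>0 p. ennreal (norm (\<phi> l\<^sub>0 t p' b - y))) \<le> hsemi (\<phi> l\<^sub>0 t (\<theta> (-t) p) ` U (\<theta> (-t) p)) (A\<^sub>0 p)"
        unfolding hsemi_def by (rule SUP_upper) (use bU p'_def in auto)
      also have "\<dots> < ennreal (\<epsilon>/2)" by (rule t0[OF t(2)])
      finally obtain y where y: "y \<in> A\<^sub>0 p" "ennreal (norm (\<phi> l\<^sub>0 t p' b - y)) < ennreal (\<epsilon>/2)"
        by (auto simp: INF_less_iff)
      hence n2: "norm (\<phi> l\<^sub>0 t p' b - y) < \<epsilon>/2" by (simp add: ennreal_less_iff)
      have "norm (a - y) \<le> norm (a - \<phi> l\<^sub>0 t p' b) + norm (\<phi> l\<^sub>0 t p' b - y)" by (rule norm_diff_triangle_le[OF order_refl order_refl])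
      hence "norm (a - y) < \<epsilon>" using n1 n2 by simp
      thus "\<exists>y\<in>A\<^sub>0 p. norm (a - y) < \<epsilon>" using y(1) by blast
    qed
  qed
  have lim: "((\<lambda>l. hsemi (A l p) S) \<longlongrightarrow> 0) (at l\<^sub>0)" if S: "A\<^sub>0 p \<subseteq> S" for p S
  proof (rule ennreal_tendsto_zeroI)
    fix e :: real assume e: "e > 0"
    show "eventually (\<lambda>l. hsemi (A l p) S \<le> ennreal e) (at l\<^sub>0)"
      using bound[OF e, of p]
    proof eventually_elim
      case (elim l)
      show ?case unfolding hsemi_def
      proof (rule SUP_least)
        fix a assume "a \<in> A l p"
        then obtain y where y: "y \<in> A\<^sub>0 p" "norm (a - y) < e" using elim by blast
        have "(INF y\<in>S. ennreal (norm (a - y))) \<le> ennreal (norm (a - y))" by (rule INF_lower) (use y S in blast)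
        also have "\<dots> \<le> ennreal e" using y(2) by (intro ennreal_leI) simp
        finally show "(INF y\<in>S. ennreal (norm (a - y))) \<le> ennreal e" .
      qed
    qed
  qed
  show ?thesis
  proof (intro exI[of _ \<delta>] exI[of _ A] conjI allI impI)
    show "\<delta> > 0" by (rule \<delta>(1))
    fix l assume "\<bar>l - l\<^sub>0\<bar> < \<delta>" thus "pullback_attractor (\<phi> l) \<theta> (A l)" using Al by blast
  next
    fix p show "((\<lambda>l. hsemi (A l p) (\<Union>q. A\<^sub>0 q)) \<longlongrightarrow> 0) (at l\<^sub>0)" by (rule lim) blast
  next
    fix p show "((\<lambda>l. hsemi (A l p) (A\<^sub>0 p)) \<longlongrightarrow> 0) (at l\<^sub>0)" by (rule lim) blast
  qed
qed

end
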